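(* Every sequential rule and every reverse sequential rule (as defined in the context) is a linear mapping from $\mathcal E^*$ to $2^{\mathcal A_k}$.
   Context: Let $\mathcal A=[m]$, $k\le m$, and for $i\le m$ let $\mathcal A_i$ be the set of $i$-element subsets of $\mathcal A$. The preference space is $\mathcal E=2^{\mathcal A}$; a profile is $P=(A_1,\dots,A_n)\in\mathcal E^n$, $n\ge1$, and $\mathcal E^*=\bigcup_{n\ge1}\mathcal E^n$. $\mathrm{Hist}(P)\in\mathbb Z_{\ge0}^{|\mathcal E|}$ counts the occurrences of each ballot in $P$. A mapping $f:\mathcal E^*\to\mathcal D$ ($\mathcal D$ finite) is linear if there exist $\vec h_1,\dots,\vec h_K\in\mathbb R^{|\mathcal E|}$ and $g:\{+,-,0\}^K\to\mathcal D$ with $f(P)=g(\mathrm{sign}(\mathrm{Hist}(P)\cdot\vec h_1),\dots,\mathrm{sign}(\mathrm{Hist}(P)\cdot\vec h_K))$ for all $P$. For a function $\mathbf s_i:2^{\mathcal A}\times\mathcal A_i\to\mathbb R$ and $M\in\mathcal A_i$ write $\mathbf s_i(P,M)=\sum_{j=1}^n\mathbf s_i(A_j,M)$. Sequential rule: given $\mathbf s_1,\dots,\mathbf s_k$ with $\mathbf s_i:2^{\mathcal A}\times\mathcal A_i\to\mathbb R$, set $\mathcal S_0=\{\emptyset\}$ and for $i=1,\dots,k$, $\mathcal S_i=\arg\max\{\mathbf s_i(P,M\cup\{a\}): M\in\mathcal S_{i-1}, a\in\mathcal A\setminus M\}$ (the set of all maximizing sets $M\cup\{a\}$); output $\mathcal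 S_k$. Reverse sequential rule: given $\mathbf s_1,\dots,\mathbf s_{m-k}$ with $\mathbf s_i:2^{\mathcal A}\times\mathcal A_{m-i}\to\mathbb R$, set $\mathcal S_0=\{\mathcal A\}$ and for $i=1,\dots,m-k$, $\mathcal S_i=\arg\max\{\mathbf s_i(P,M\setminus\{a\}): M\in\mathcal S_{i-1}, a\in M\}$; output $\mathcal S_{m-k}$. *)

theory Defs
  imports Complex_Main
begin

definition alts :: "nat \<Rightarrow> nat set" where
  "alts m = {1..m}"

definition profiles :: "nat \<Rightarrow> nat set list set" where
  "profiles m = {P. P \<noteq> [] \<and> set P \<subseteq> Pow (alts m)}"

definition hist :: "nat set list \<Rightarrow> nat set \<Rightarrow> nat" where
  "hist P B = count_list P B"

text \<open>Linear mapping: finitely many vectors h_1..h_K indexed by ballots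
(given as a list of functions on ballots) and a function g of the sign vector.\<close>
definition linear_mapping :: "nat \<Rightarrow> (nat set list \<Rightarrow> 'd) \<Rightarrow> bool" where
  "linear_mapping m f \<longleftrightarrow>
     (\<exists>(hs :: (nat set \<Rightarrow> real) list) (g :: real list \<Rightarrow> 'd).
        \<forall>P \<in> profiles m.
          f P = g (map (\<lambda>h. sgn (\<Sum>B \<in> Pow (alts m). real (hist P B) * h B)) hs))"

definition pscore :: "(nat set \<Rightarrow> nat set \<Rightarrow> real) \<Rightarrow> nat set list \<Rightarrow> nat set \<Rightarrow> real" where
  "pscore s P M = (\<Sum>j<length P. s (P ! j) M)"

definition argmax_sets :: "(nat set \<Rightarrow> real) \<Rightarrow> nat set set \<Rightarrow> nat set set" where
  "argmax_sets f C = {X \<in> C. \<forall>Y \<in> C. f Y \<le> f X}"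

text \<open>Sequential rule; s i is the score function used in round i (i = 1..k).\<close>
fun seq_sets :: "nat \<Rightarrow> (nat \<Rightarrow> nat set \<Rightarrow> nat set \<Rightarrow> real) \<Rightarrow> nat set list \<Rightarrow> nat \<Rightarrow> nat set set" where
  "seq_sets m s P 0 = {{}}"
| "seq_sets m s P (Suc i) =
     argmax_sets (pscore (s (Suc i)) P)
       {insert a M | M a. M \<in> seq_sets m s P i \<and> a \<in> alts m - M}"

definition sequential_rule :: "nat \<Rightarrow> nat \<Rightarrow> (nat \<Rightarrow> nat set \<Rightarrow> nat set \<Rightarrow> real) \<Rightarrow> nat set list \<Rightarrow> nat set set" where
  "sequential_rule m k s P = seq_sets m s P k"

text \<open>Reverse sequential rule; s i is used in round i (i = 1..m-k), scoring (m-i)-sets.\<close>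
fun rev_seq_sets :: "nat \<Rightarrow> (nat \<Rightarrow> nat set \<Rightarrow> nat set \<Rightarrow> real) \<Rightarrow> nat set list \<Rightarrow> nat \<Rightarrow> nat set set" where
  "rev_seq_sets m s P 0 = {alts m}"
| "rev_seq_sets m s P (Suc i) =
     argmax_sets (pscore (s (Suc i)) P)
       {M - {a} | M a. M \<in> rev_seq_sets m s P i \<and> a \<in> M}"

definition reverse_sequential_rule :: "nat \<Rightarrow> nat \<Rightarrow> (nat \<Rightarrow> nat set \<Rightarrow> nat set \<Rightarrow> real) \<Rightarrow> nat set list \<Rightarrow> nat set set" where
  "reverse_sequential_rule m k s P = rev_seq_sets m s P (m - k)"

end

theory Submission
  imports Defs
begin

lemma sum_count_list:
  fixes t :: "'a \<Rightarrow> real"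
  assumes "finite S" "set xs \<subseteq> S"
  shows "(\<Sum>j<length xs. t (xs ! j)) = (\<Sum>B\<in>S. real (count_list xs B) * t B)"
  using assms(2)
proof (induction xs)
  case Nil
  then show ?case by simp
next
  case (Cons x xs)
  have "(\<Sum>j<length (x#xs). t ((x#xs) ! j)) = t x + (\<Sum>j<length xs. t (xs ! j))"
    unfolding length_Cons sum.lessThan_Suc_shift by simp
  also have "\<dots> = t x + (\<Sum>B\<in>S. real (count_list xs B) * t B)" using Cons by simp
  also have "\<dots> = (\<Sum>B\<in>S. (if x = B then t B else 0)) + (\<Sum>B\<in>S. real (count_list xs B) * t B)"
    using Cons.prems assms(1) by (simp add: sum.delta)
  also have "\<dots> = (\<Sum>B\<in>S. real (count_list (x#xs) B) * t B)"
    unfolding sum.distrib[symmetric] by (rule sum.cong) (auto simp: algebra_simps)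
  finally show ?case .
qed

lemma pscore_hist:
  assumes "P \<in> profiles m"
  shows "pscore t P X = (\<Sum>B\<in>Pow (alts m). real (hist P B) * t B X)"
  using assms unfolding pscore_def hist_def profiles_def alts_def
  by (intro sum_count_list) auto

definition E :: "nat \<Rightarrow> (nat \<Rightarrow> nat set \<Rightarrow> nat set \<Rightarrow> real) \<Rightarrow> nat set list \<Rightarrow> nat set list \<Rightarrow> bool" where
  "E m s P Q \<longleftrightarrow> (\<forall>i\<le>m. \<forall>X\<in>Pow (alts m). \<forall>Y\<in>Pow (alts m).
      (pscore (s i) P Y \<le> pscore (s i) P X) = (pscore (s i) Q Y \<le> pscore (s i) Q X))"

lemma argmax_eq:
  assumes "E m s P Q" "i \<le> m" "C \<subseteq> Pow (alts m)"
  shows "argmax_sets (pscore (s i) P) C = argmax_sets (pscore (s i) Q) C"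
proof -
  have "\<And>X Y. X \<in> C \<Longrightarrow> Y \<in> C \<Longrightarrow>
     (pscore (s i) P Y \<le> pscore (s i) P X) = (pscore (s i) Q Y \<le> pscore (s i) Q X)"
    using assms unfolding E_def by blast
  then show ?thesis unfolding argmax_sets_def by blast
qed

lemma argmax_sub: "argmax_sets f C \<subseteq> C"
  unfolding argmax_sets_def by blast

lemma seq_sub: "seq_sets m s P i \<subseteq> Pow (alts m)"
proof (induction i)
  case 0
  then show ?case by simp
next
  case (Suc i)
  then show ?case using argmax_sub by fastforce
qed

lemma rev_sub: "rev_seq_sets m s P i \<subseteq> Pow (alts m)"
proof (induction i)
  case 0
  then show ?case by simp
next
  case (Suc i)
  then show ?case using argmax_sub by fastforce
qed

lemma seq_eq:
  assumes "E m s P Q"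
  shows "i \<le> m \<Longrightarrow> seq_sets m s P i = seq_sets m s Q i"
proof (induction i)
  case 0
  then show ?case by simp
next
  case (Suc i)
  let ?C = "{insert a M | M a. M \<in> seq_sets m s Q i \<and> a \<in> alts m - M}"
  have C: "?C \<subseteq> Pow (alts m)" using seq_sub[of m s Q i] by auto
  have "seq_sets m s P (Suc i) = argmax_sets (pscore (s (Suc i)) P) ?C"
    using Suc by simp
  also have "\<dots> = argmax_sets (pscore (s (Suc i)) Q) ?C"
    using argmax_eq[OF assms Suc.prems C] .
  finally show ?case by simp
qed

lemma rev_eq:
  assumes "E m s P Q"
  shows "i \<le> m \<Longrightarrow> rev_seq_sets m s P i = rev_seq_sets m s Q i"
proof (induction i)
  case 0
  then show ?case by simp
next
  case (Suc i)
  let ?C = "{M - {a} | M a. M \<in> rev_seq_sets m s Q i \<and> a \<in> M}"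
  have C: "?C \<subseteq> Pow (alts m)" using rev_sub[of m s Q i] by auto
  have "rev_seq_sets m s P (Suc i) = argmax_sets (pscore (s (Suc i)) P) ?C"
    using Suc by simp
  also have "\<dots> = argmax_sets (pscore (s (Suc i)) Q) ?C"
    using argmax_eq[OF assms Suc.prems C] .
  finally show ?case by simp
qed

lemma linear_from_E:
  fixes f :: "nat set list \<Rightarrow> 'd"
  assumes inv: "\<And>P Q. P \<in> profiles m \<Longrightarrow> Q \<in> profiles m \<Longrightarrow> E m s P Q \<Longrightarrow> f P = f Q"
  shows "linear_mapping m f"
proof -
  have fin: "finite ({..m} \<times> Pow (alts m) \<times> Pow (alts m))"
    by (simp add: alts_def)
  obtain ts where ts: "set ts = {..m} \<times> Pow (alts m) \<times> Pow (alts m)"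
    using finite_list[OF fin] by blast
  define hs :: "(nat set \<Rightarrow> real) list" where
    "hs = map (\<lambda>(i,X,Y). \<lambda>B. s i B X - s i B Y) ts"
  define sg where "sg P = map (\<lambda>h. sgn (\<Sum>B \<in> Pow (alts m). real (hist P B) * h B)) hs" for P
  define g where "g v = f (SOME P. P \<in> profiles m \<and> sg P = v)" for v
  have key: "E m s P Q" if P: "P \<in> profiles m" and Q: "Q \<in> profiles m" and eq: "sg P = sg Q" for P Q
  proof -
  have cmp: "(pscore (s i) P Y \<le> pscore (s i) P X) = (pscore (s i) Q Y \<le> pscore (s i) Q X)"
    if i: "i \<le> m" and X: "X \<in> Pow (alts m)" and Y: "Y \<in> Pow (alts m)" for i X Y
  proof -
    let ?h = "\<lambda>B. s i B X - s i B Y"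
    have mem: "(i,X,Y) \<in> set ts" using ts i X Y by simp
    have "?h \<in> (\<lambda>(i,X,Y). \<lambda>B. s i B X - s i B Y) ` set ts"
      by (rule image_eqI[OF _ mem]) simp
    then have hmem: "?h \<in> set hs" unfolding hs_def set_map .
    have all: "\<forall>h\<in>set hs. sgn (\<Sum>B \<in> Pow (alts m). real (hist P B) * h B)
        = sgn (\<Sum>B \<in> Pow (alts m). real (hist Q B) * h B)"
      using eq unfolding sg_def map_eq_conv .
    have sgn_eq: "sgn (\<Sum>B \<in> Pow (alts m). real (hist P B) * ?h B)
        = sgn (\<Sum>B \<in> Pow (alts m). real (hist Q B) * ?h B)"
      using bspec[OF all hmem] .
    have dP: "pscore (s i) P X - pscore (s i) P Y = (\<Sum>B \<in> Pow (alts m). real (hist P B) * ?h B)"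
      using pscore_hist[OF P] by (simp add: sum_subtractf[symmetric] algebra_simps)
    have dQ: "pscore (s i) Q X - pscore (s i) Q Y = (\<Sum>B \<in> Pow (alts m). real (hist Q B) * ?h B)"
      using pscore_hist[OF Q] by (simp add: sum_subtractf[symmetric] algebra_simps)
    have "sgn (pscore (s i) P X - pscore (s i) P Y) = sgn (pscore (s i) Q X - pscore (s i) Q Y)"
      using sgn_eq dP dQ by simp
    then show "(pscore (s i) P Y \<le> pscore (s i) P X) = (pscore (s i) Q Y \<le> pscore (s i) Q X)"
      by (smt (verit) sgn_real_def)
  qed
  then show ?thesis unfolding E_def by blast
  qed
  have "\<forall>P \<in> profiles m. f P = g (sg P)"
  proof
    fix P assume P: "P \<in> profiles m"
    have ex: "\<exists>Q. Q \<in> profiles m \<and> sg Q = sg P" using P by blast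
    define Q where "Q = (SOME Q. Q \<in> profiles m \<and> sg Q = sg P)"
    have Q: "Q \<in> profiles m \<and> sg Q = sg P" unfolding Q_def using someI_ex[OF ex] .
    have "f P = f Q" using inv[OF P] Q key[OF P] by metis
    then show "f P = g (sg P)" unfolding g_def Q_def by simp
  qed
  then show ?thesis unfolding linear_mapping_def sg_def by blast
qed

theorem theorem2:
  fixes m k :: nat and s :: "nat \<Rightarrow> nat set \<Rightarrow> nat set \<Rightarrow> real"
  assumes "k \<le> m"
  shows "linear_mapping m (sequential_rule m k s) \<and> linear_mapping m (reverse_sequential_rule m k s)"
proof
  show "linear_mapping m (sequential_rule m k s)"
    by (rule linear_from_E[where s = s]) (simp add: sequential_rule_def seq_eq assms)
  show "linear_mapping m (reverse_sequential_rule m k s)"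
    by (rule linear_from_E[where s = s]) (simp add: reverse_sequential_rule_def rev_eq)
qed

end
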